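(* Let $1\le d<n$, let $S\subseteq[n]$ with $|S|=d$, let $J(t)=e_d(t\mathbf{1}+\mathbf{1}_S)$, and let $\lambda$ be the largest root of $J$. Then $J'(\lambda)\ge \dfrac{1}{n^{d(n-d)}}$.
   Context: $e_d(x)=\sum_{T\subseteq[n],|T|=d}\prod_{i\in T}x_i$, $\mathbf{1}=(1,\dots,1)\in\mathbb{R}^n$, and $\mathbf{1}_S$ is the indicator vector of $S$. Equivalently $J(t)=\frac{1}{(n-d)!}\frac{d^{n-d}}{dt^{n-d}}\big[t^{n-d}(t+1)^d\big]$. *)

theory Defs
  imports "HOL-Computational_Algebra.Polynomial"
begin

text \<open>Elementary symmetric polynomial e_d of the vector (x_0, ..., x_{n-1}).
  Indices [n] = {1..n} of the paper are rendered as {0..<n}.\<close>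
definition esym :: "nat \<Rightarrow> nat \<Rightarrow> (nat \<Rightarrow> 'a::comm_semiring_1) \<Rightarrow> 'a" where
  "esym n d x = (\<Sum>T \<in> {T. T \<subseteq> {..<n} \<and> card T = d}. \<Prod>i\<in>T. x i)"

definition Jpoly :: "nat \<Rightarrow> nat \<Rightarrow> nat set \<Rightarrow> real poly" where
  "Jpoly n d S = esym n d (\<lambda>i. [: (if i \<in> S then 1 else 0), 1 :])"

end

theory Submission
  imports Defs
begin


lemma count_supsets:
  assumes "U \<subseteq> {..<n}" "card U \<le> d"
  shows "card {T. (T \<subseteq> {..<n} \<and> card T = d) \<and> U \<subseteq> T} = (n - card U) choose (d - card U)"
proof -
  have fU: "finite U" using assms(1) finite_subset by blast
  have eq: "{T. (T \<subseteq> {..<n} \<and> card T = d) \<and> U \<subseteq> T}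
      = (\<lambda>V. V \<union> U) ` {V. V \<subseteq> {..<n} - U \<and> card V = d - card U}"
  proof (rule set_eqI, rule iffI)
    fix T assume T: "T \<in> {T. (T \<subseteq> {..<n} \<and> card T = d) \<and> U \<subseteq> T}"
    hence "T = (T - U) \<union> U" by blast
    moreover have "card (T - U) = d - card U"
      using T fU by (simp add: card_Diff_subset)
    moreover have "T - U \<subseteq> {..<n} - U" using T by blast
    ultimately show "T \<in> (\<lambda>V. V \<union> U) ` {V. V \<subseteq> {..<n} - U \<and> card V = d - card U}" by blast
  next
    fix T assume "T \<in> (\<lambda>V. V \<union> U) ` {V. V \<subseteq> {..<n} - U \<and> card V = d - card U}"
    then obtain V where V: "V \<subseteq> {..<n} - U" "card V = d - card U" and T: "T = V \<union> U" by blast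
    have fV: "finite V" using V(1) finite_subset by blast
    have "card T = card V + card U" unfolding T by (rule card_Un_disjoint) (use fV fU V(1) in auto)
    thus "T \<in> {T. (T \<subseteq> {..<n} \<and> card T = d) \<and> U \<subseteq> T}" using V T assms by auto
  qed
  have inj: "inj_on (\<lambda>V. V \<union> U) {V. V \<subseteq> {..<n} - U \<and> card V = d - card U}"
    by (rule inj_onI) blast
  have "card {T. (T \<subseteq> {..<n} \<and> card T = d) \<and> U \<subseteq> T} = card {V. V \<subseteq> {..<n} - U \<and> card V = d - card U}"
    unfolding eq by (rule card_image[OF inj])
  also have "\<dots> = card ({..<n} - U) choose (d - card U)" by (rule n_subsets) simp
  also have "card ({..<n} - U) = n - card U" using assms(1) fU by (simp add: card_Diff_subset)
  finally show ?thesis .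
qed

lemma prod_indic:
  assumes "finite U"
  shows "(\<Prod>i\<in>U. (if i \<in> S then 1 else 0::real)) = (if U \<subseteq> S then 1 else 0)"
  using assms by (induction U rule: finite_induct) auto

lemma sum_pow_card:
  assumes "finite S"
  shows "(\<Sum>U\<in>Pow S. h (card U)) = (\<Sum>j\<le>card S. of_nat (card S choose j) * (h j :: real))"
proof -
  have "(\<Sum>U\<in>Pow S. h (card U)) = (\<Sum>j\<le>card S. \<Sum>U\<in>{U\<in>Pow S. card U = j}. h (card U))"
    by (rule sum.group[symmetric]) (use assms in \<open>auto intro: card_mono\<close>)
  also have "\<dots> = (\<Sum>j\<le>card S. of_nat (card S choose j) * h j)"
  proof (rule sum.cong[OF refl])
    fix j
    have "{U\<in>Pow S. card U = j} = {B. B \<subseteq> S \<and> card B = j}" by auto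
    hence "card {U\<in>Pow S. card U = j} = card S choose j" using n_subsets[OF assms] by simp
    moreover have "(\<Sum>U\<in>{U\<in>Pow S. card U = j}. h (card U)) = (\<Sum>U\<in>{U\<in>Pow S. card U = j}. h j)"
      by (rule sum.cong) auto
    ultimately show "(\<Sum>U\<in>{U\<in>Pow S. card U = j}. h (card U)) = of_nat (card S choose j) * h j"
      by simp
  qed
  finally show ?thesis .
qed

lemma J_eval:
  assumes "S \<subseteq> {..<n}" "card S = d" "d \<le> n"
  shows "poly (Jpoly n d S) t = (\<Sum>k\<le>d. real ((d choose k) * ((n - d + k) choose k)) * t ^ k)"
proof -
  let ?s = "\<lambda>i. (if i \<in> S then 1 else 0::real)"
  let ?TT = "{T. T \<subseteq> {..<n} \<and> card T = d}"
  have fS: "finite S" using assms(1) finite_subset by blast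
  have fTT: "finite ?TT" by (rule finite_subset[of _ "Pow {..<n}"]) auto
  have "poly (Jpoly n d S) t = (\<Sum>T\<in>?TT. \<Prod>i\<in>T. (?s i + t))"
    unfolding Jpoly_def esym_def by (simp add: poly_sum poly_prod)
  also have "\<dots> = (\<Sum>T\<in>?TT. \<Sum>U\<in>{U\<in>Pow S. U \<subseteq> T}. t ^ (d - card U))"
  proof (rule sum.cong[OF refl])
    fix T assume T: "T \<in> ?TT"
    hence fT: "finite T" using finite_subset by blast
    have "(\<Prod>i\<in>T. (?s i + t)) = (\<Sum>U\<in>Pow T. prod ?s U * prod (\<lambda>_. t) (T - U))"
      by (rule prod_add[OF fT])
    also have "\<dots> = (\<Sum>U\<in>Pow T. (if U \<subseteq> S then t ^ (d - card U) else 0))"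
    proof (rule sum.cong[OF refl])
      fix U assume U: "U \<in> Pow T"
      hence fU: "finite U" using fT finite_subset by blast
      have "card (T - U) = d - card U" using U T fU by (simp add: card_Diff_subset)
      thus "prod ?s U * prod (\<lambda>_. t) (T - U) = (if U \<subseteq> S then t ^ (d - card U) else 0)"
        using prod_indic[OF fU, of S] by simp
    qed
    also have "\<dots> = (\<Sum>U\<in>{U\<in>Pow T. U \<subseteq> S}. t ^ (d - card U))"
      by (simp add: sum.inter_filter[symmetric] fT)
    also have "{U\<in>Pow T. U \<subseteq> S} = {U\<in>Pow S. U \<subseteq> T}" by auto
    finally show "(\<Prod>i\<in>T. (?s i + t)) = (\<Sum>U\<in>{U\<in>Pow S. U \<subseteq> T}. t ^ (d - card U))" .
  qed
  also have "\<dots> = (\<Sum>U\<in>Pow S. \<Sum>T | T \<in> ?TT \<and> U \<subseteq> T. t ^ (d - card U))"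
    by (rule sum.swap_restrict[OF fTT]) (simp add: fS)
  also have "\<dots> = (\<Sum>U\<in>Pow S. real ((n - card U) choose (d - card U)) * t ^ (d - card U))"
  proof (rule sum.cong[OF refl])
    fix U assume U: "U \<in> Pow S"
    have cU: "card U \<le> d" using U fS assms(2) card_mono by blast
    have "{T. T \<in> ?TT \<and> U \<subseteq> T} = {T. (T \<subseteq> {..<n} \<and> card T = d) \<and> U \<subseteq> T}" by simp
    hence "card {T. T \<in> ?TT \<and> U \<subseteq> T} = (n - card U) choose (d - card U)"
      using count_supsets[of U n d] U assms(1) cU by auto
    thus "(\<Sum>T | T \<in> ?TT \<and> U \<subseteq> T. t ^ (d - card U)) = real ((n - card U) choose (d - card U)) * t ^ (d - card U)"
      by simp
  qed
  also have "\<dots> = (\<Sum>j\<le>d. real (d choose j) * (real ((n - j) choose (d - j)) * t ^ (d - j)))"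
    using sum_pow_card[OF fS, of "\<lambda>j. real ((n - j) choose (d - j)) * t ^ (d - j)"] assms(2) by simp
  also have "\<dots> = (\<Sum>k\<le>d. real ((d choose k) * ((n - d + k) choose k)) * t ^ k)"
  proof (rule sum.reindex_bij_witness[of _ "\<lambda>k. d - k" "\<lambda>j. d - j"])
    fix j assume k: "j \<in> {..d}"
    have "d choose (d - j) = d choose j" using k by (simp add: binomial_symmetric[symmetric])
    moreover have "n - d + (d - j) = n - j" "d - (d - j) = j" using k assms(3) by auto
    ultimately show "real ((d choose (d - j)) * ((n - d + (d - j)) choose (d - j))) * t ^ (d - j)
       = real (d choose j) * (real ((n - j) choose (d - j)) * t ^ (d - j))" by simp
  qed auto
  finally show ?thesis .
qed


lemma rec_nat:
  fixes d m k :: nat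
  shows "(k+1)*(k+1)*((d choose (k+1)) * ((m+(k+1)) choose (k+1))) = (d-k)*(m+k+1)*((d choose k)*((m+k) choose k))"
proof -
  have a: "(k+1) * (d choose (k+1)) = (d-k) * (d choose k)"
    using binomial_absorption[of k d] binomial_absorb_comp[of d k] by simp
  have b: "(k+1) * ((m+(k+1)) choose (k+1)) = (m+k+1) * ((m+k) choose k)"
    using Suc_times_binomial[of k "m+k"] by simp
  have "(k+1)*(k+1)*((d choose (k+1)) * ((m+(k+1)) choose (k+1)))
      = ((k+1) * (d choose (k+1))) * ((k+1) * ((m+(k+1)) choose (k+1)))" by (simp only: ac_simps)
  also have "\<dots> = (d-k)*(m+k+1)*((d choose k)*((m+k) choose k))" unfolding a b by (simp only: ac_simps)
  finally show ?thesis .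
qed

lemma term_id:
  fixes d m k :: nat
  assumes "k \<le> d"
  defines "c \<equiv> \<lambda>k. real ((d choose k) * ((m+k) choose k))"
  shows "real k * c k + real (k+1) * c (k+1) + (real m - real d) * c k = (real d + 1) * (real m * c k / real (k+1))"
proof -
  have r0: "real ((k+1)*(k+1)*((d choose (k+1)) * ((m+(k+1)) choose (k+1)))) = real ((d-k)*(m+k+1)*((d choose k)*((m+k) choose k)))"
    by (simp only: rec_nat)
  have r: "real (k+1) * real (k+1) * c (k+1) = (real d - real k) * (real m + real k + 1) * c k"
    using r0 unfolding c_def by (simp only: of_nat_mult of_nat_add of_nat_diff[OF assms(1)] of_nat_1)
  have "real (k+1) * (real k * c k + real (k+1) * c (k+1) + (real m - real d) * c k)
     = real (k+1) * (real d + 1) * (real m * c k / real (k+1))"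
  proof -
    have "real (k+1) * (real k * c k + real (k+1) * c (k+1) + (real m - real d) * c k)
        = real (k+1) * real k * c k + (real d - real k) * (real m + real k + 1) * c k + real (k+1) * (real m - real d) * c k"
      using r by (simp add: algebra_simps)
    also have "\<dots> = (real d + 1) * real m * c k" by (simp add: algebra_simps)
    finally show ?thesis by simp
  qed
  hence "real (k+1) * (real k * c k + real (k+1) * c (k+1) + (real m - real d) * c k)
     = (real d + 1) * (real m * c k)" by simp
  moreover have "real (k+1) \<noteq> 0" by simp
  ultimately show ?thesis by (simp add: eq_divide_eq ac_simps del: of_nat_Suc of_nat_add)
qed



lemma ident:
  fixes d m :: nat and t :: real
  defines "c \<equiv> \<lambda>k. real ((d choose k) * ((m+k) choose k))"
  shows "t*(t+1)*(\<Sum>k\<le>d. c k * (real k * t^(k-1))) + (real m - real d) * t * (\<Sum>k\<le>d. c k * t^k)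
       = (real d + 1) * (\<Sum>k\<le>d. (real m * c k / real (k+1)) * t^(Suc k))"
proof -
  have tf: "t * (\<Sum>k\<le>d. c k * (real k * t^(k-1))) = (\<Sum>k\<le>d. real k * c k * t^k)"
    unfolding sum_distrib_left
  proof (rule sum.cong[OF refl])
    fix k show "t * (c k * (real k * t ^ (k - 1))) = real k * c k * t ^ k"
      by (cases k) auto
  qed
  have cz: "c (Suc d) = 0" unfolding c_def by simp
  have sh: "(\<Sum>k\<le>d. real k * c k * t^k) = (\<Sum>k\<le>d. real (k+1) * c (k+1) * t^(Suc k))"
  proof -
    have "(\<Sum>k\<le>d. real k * c k * t^k) = (\<Sum>k\<le>Suc d. real k * c k * t^k)"
      using cz by simp
    also have "\<dots> = (\<Sum>k\<le>d. real (Suc k) * c (Suc k) * t^(Suc k))"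
      by (subst sum.atMost_Suc_shift) simp
    finally show ?thesis by simp
  qed
  have "t*(t+1)*(\<Sum>k\<le>d. c k * (real k * t^(k-1))) = (t+1) * (\<Sum>k\<le>d. real k * c k * t^k)"
    using tf by (simp add: ac_simps)
  also have "\<dots> = (\<Sum>k\<le>d. real k * c k * t^(Suc k)) + (\<Sum>k\<le>d. real k * c k * t^k)"
    by (simp add: algebra_simps sum_distrib_left sum.distrib)
  finally have L: "t*(t+1)*(\<Sum>k\<le>d. c k * (real k * t^(k-1)))
     = (\<Sum>k\<le>d. real k * c k * t^(Suc k)) + (\<Sum>k\<le>d. real (k+1) * c (k+1) * t^(Suc k))"
    using sh by simp
  have M: "(real m - real d) * t * (\<Sum>k\<le>d. c k * t^k) = (\<Sum>k\<le>d. (real m - real d) * c k * t^(Suc k))"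
    by (simp add: sum_distrib_left ac_simps)
  have "t*(t+1)*(\<Sum>k\<le>d. c k * (real k * t^(k-1))) + (real m - real d) * t * (\<Sum>k\<le>d. c k * t^k)
     = (\<Sum>k\<le>d. (real k * c k + real (k+1) * c (k+1) + (real m - real d) * c k) * t^(Suc k))"
    unfolding L M by (simp add: sum.distrib[symmetric] algebra_simps)
  also have "\<dots> = (\<Sum>k\<le>d. ((real d + 1) * (real m * c k / real (k+1))) * t^(Suc k))"
    by (rule sum.cong[OF refl]) (simp only: c_def term_id atMost_iff)
  also have "\<dots> = (real d + 1) * (\<Sum>k\<le>d. (real m * c k / real (k+1)) * t^(Suc k))"
    by (simp add: sum_distrib_left ac_simps)
  finally show ?thesis .
qed

lemma pow_ge_self:
  fixes t :: real assumes "-1 \<le> t" "t \<le> 0" "k \<ge> 1"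
  shows "t ^ k \<ge> t"
proof -
  have "\<bar>t ^ k\<bar> = \<bar>t\<bar> ^ k" by (simp add: power_abs)
  also have "\<dots> \<le> \<bar>t\<bar> ^ 1" by (rule power_decreasing) (use assms in auto)
  finally show ?thesis using assms by auto
qed

lemma B_bound:
  fixes n d :: nat assumes "1 \<le> d" "d < n"
  shows "(\<Sum>k\<le>d. (d choose k) * ((n - d + k) choose k)) \<le> (d+1) * (n-d) * n ^ (d * (n - d))"
proof -
  let ?m = "n - d"
  have "(\<Sum>k\<le>d. (d choose k) * ((?m + k) choose k)) \<le> (\<Sum>k\<le>d. (d choose k) * (n choose ?m))"
  proof (rule sum_mono)
    fix k assume k: "k \<in> {..d}"
    have "(?m + k) choose k = (?m + k) choose ?m" by (subst binomial_symmetric) auto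
    also have "\<dots> \<le> n choose ?m" by (rule binomial_right_mono) (use k assms in auto)
    finally show "(d choose k) * ((?m + k) choose k) \<le> (d choose k) * (n choose ?m)" by simp
  qed
  also have "\<dots> = 2 ^ d * (n choose ?m)" by (simp add: sum_distrib_right[symmetric] choose_row_sum)
  also have "\<dots> \<le> n ^ d * n ^ ?m"
    by (rule mult_mono) (use assms in \<open>auto intro: power_mono binomial_le_pow\<close>)
  also have "\<dots> = n * n ^ (d + ?m - 1)"
    using assms by (simp add: power_add[symmetric] power_Suc[symmetric])
  also have "\<dots> \<le> ((d+1) * ?m) * n ^ (d * ?m)"
  proof (rule mult_mono)
    obtain d' where d': "d = Suc d'" using assms by (cases d) auto
    obtain m' where m': "?m = Suc m'" using assms by (cases ?m) auto
    have nn: "n = Suc d' + Suc m'" using assms d' m' by simp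
    show "n \<le> (d+1) * ?m" unfolding m' by (simp add: nn d')
    have "d + ?m - 1 \<le> d * ?m" unfolding m' by (simp add: d')
    thus "n ^ (d + ?m - 1) \<le> n ^ (d * ?m)" by (rule power_increasing) (use assms in auto)
  qed auto
  finally show ?thesis by simp
qed


theorem lemma10:
  fixes n d :: nat and S :: "nat set" and lam :: real
  assumes "1 \<le> d" and "d < n"
    and "S \<subseteq> {..<n}" and "card S = d"
    and "poly (Jpoly n d S) lam = 0"
    and "\<forall>t. poly (Jpoly n d S) t = 0 \<longrightarrow> t \<le> lam"
  shows "poly (pderiv (Jpoly n d S)) lam \<ge> 1 / real n ^ (d * (n - d))"
proof -
  define m where "m = n - d"
  have m1: "m \<ge> 1" using assms(2) unfolding m_def by simp
  define c where "c = (\<lambda>k. real ((d choose k) * ((m+k) choose k)))"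
  define f where "f = (\<lambda>t::real. \<Sum>k\<le>d. c k * t^k)"
  define f' where "f' = (\<lambda>t::real. \<Sum>k\<le>d. c k * (real k * t^(k-1)))"
  define g where "g = (\<lambda>t::real. \<Sum>k\<le>d. (real m * c k / real (k+1)) * t^(Suc k))"
  define B where "B = (\<Sum>k\<le>d. c k)"
  let ?J = "Jpoly n d S"
  have PJ: "poly ?J t = f t" for t
    unfolding f_def c_def m_def using J_eval[OF assms(3) assms(4)] assms(2) by simp
  have c0: "c 0 = 1" unfolding c_def by simp
  have cnn: "c k \<ge> 0" for k unfolding c_def by simp
  have F1: "(f has_real_derivative f' t) (at t)" for t
    unfolding f_def f'_def by (auto intro!: derivative_eq_intros sum.cong simp: mult_ac)
  have F2: "(g has_real_derivative real m * f t) (at t)" for t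
  proof -
    have "(g has_real_derivative (\<Sum>k\<le>d. (real m * c k / real (k+1)) * (real (Suc k) * t^(Suc k - Suc 0)))) (at t)"
      unfolding g_def by (intro DERIV_sum DERIV_cmult DERIV_pow)
    hence "(g has_real_derivative (\<Sum>k\<le>d. (real m * c k / real (k+1)) * (real (Suc k) * t^k))) (at t)"
      by simp
    moreover have "(\<Sum>k\<le>d. (real m * c k / real (k+1)) * (real (Suc k) * t^k)) = real m * f t"
      unfolding f_def sum_distrib_left by (rule sum.cong) (auto simp del: of_nat_Suc)
    ultimately show ?thesis by simp
  qed
  have F3: "t*(t+1)*f' t + (real m - real d) * t * f t = (real d + 1) * g t" for t
    unfolding f_def f'_def g_def c_def by (rule ident)
  have g0: "g 0 = 0" unfolding g_def by simp
  have f0: "f 0 = 1" unfolding f_def using c0 by (simp add: atMost_atLeast0 sum.atLeast_Suc_atMost)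
  have F5: "f t \<ge> 1" if "t \<ge> 0" for t
  proof -
    have "f t = c 0 * t^0 + (\<Sum>k\<in>{1..d}. c k * t^k)"
      unfolding f_def by (simp add: atMost_atLeast0 sum.atLeast_Suc_atMost)
    moreover have "(\<Sum>k\<in>{1..d}. c k * t^k) \<ge> 0" by (rule sum_nonneg) (use cnn that in auto)
    ultimately show ?thesis using c0 by simp
  qed
  have B1: "B \<ge> 1"
  proof -
    have "B = c 0 + (\<Sum>k\<in>{1..d}. c k)" unfolding B_def by (simp add: atMost_atLeast0 sum.atLeast_Suc_atMost)
    moreover have "(\<Sum>k\<in>{1..d}. c k) \<ge> 0" by (rule sum_nonneg) (use cnn in auto)
    ultimately show ?thesis using c0 by simp
  qed
  have F6: "f t \<ge> 1 + t * B" if "-1 \<le> t" "t \<le> 0" for t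
  proof -
    have A: "(\<Sum>k\<le>d. c k * (if k = 0 then 1 else t)) \<le> f t"
      unfolding f_def
    proof (rule sum_mono)
      fix k show "c k * (if k = 0 then 1 else t) \<le> c k * t ^ k"
        using pow_ge_self[OF that, of k] cnn[of k] by (cases "k = 0") (auto intro: mult_left_mono)
    qed
    have "1 + t * B \<le> 1 + t * (B - 1)" using that by (simp add: algebra_simps)
    also have "\<dots> = c 0 + (\<Sum>k\<in>{1..d}. c k * t)"
      unfolding B_def using c0 by (simp add: atMost_atLeast0 sum.atLeast_Suc_atMost sum_distrib_left[symmetric] algebra_simps)
    also have "\<dots> = (\<Sum>k\<le>d. c k * (if k = 0 then 1 else t))"
      by (simp add: atMost_atLeast0 sum.atLeast_Suc_atMost)
    finally show ?thesis using A by simp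
  qed
  define \<delta> where "\<delta> = 1 / (2 * B)"
  have dpos: "\<delta> > 0" and dle: "\<delta> \<le> 1/2" and dB: "\<delta> * B = 1/2"
    using B1 unfolding \<delta>_def by (auto simp: field_simps)
  have F7: "f t \<ge> 1/2" if "-\<delta> \<le> t" "t \<le> 0" for t
  proof -
    have "f t \<ge> 1 + t * B" using F6[of t] that dle by auto
    moreover have "t * B \<ge> -\<delta> * B" using that B1 by (intro mult_right_mono) auto
    ultimately show ?thesis using dB by simp
  qed
  have froot: "f lam = 0" using assms(5) PJ by simp
  have lamlt: "lam < -\<delta>"
  proof (rule ccontr)
    assume "\<not> lam < -\<delta>"
    hence "f lam > 0" using F5[of lam] F7[of lam] by (cases "lam \<le> 0") auto
    thus False using froot by simp
  qed
  have F8: "f t > 0" if "t > lam" for t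
  proof (rule ccontr)
    assume "\<not> f t > 0"
    moreover have "f t \<noteq> 0" using assms(6) PJ that by force
    ultimately have neg: "f t < 0" by simp
    hence "t < 0" using F5[of t] by force
    then obtain x where "x > t" "poly ?J x = 0"
      using poly_IVT_pos[of t 0 ?J] neg f0 PJ by auto
    thus False using assms(6) that by force
  qed
  have F9: "g lam \<le> g (-\<delta>)"
  proof (rule DERIV_nonneg_imp_nondecreasing[of lam "-\<delta>" g])
    show "lam \<le> -\<delta>" using lamlt by simp
    fix x assume "lam \<le> x" "x \<le> -\<delta>"
    hence "f x \<ge> 0" using F8[of x] froot by (cases "x = lam") auto
    thus "\<exists>y. (g has_real_derivative y) (at x) \<and> 0 \<le> y" using F2[of x] by (intro exI[of _ "real m * f x"]) simp
  qed
  have F10: "g (-\<delta>) + real m * \<delta> / 2 \<le> 0"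
  proof -
    have "(\<lambda>x. g x - real m * x / 2) (-\<delta>) \<le> (\<lambda>x. g x - real m * x / 2) 0"
    proof (rule DERIV_nonneg_imp_nondecreasing[of "-\<delta>" 0 "\<lambda>x. g x - real m * x / 2"])
      show "-\<delta> \<le> 0" using dpos by simp
      fix x assume x: "-\<delta> \<le> x" "x \<le> 0"
      have "((\<lambda>x. g x - real m * x / 2) has_real_derivative real m * f x - real m / 2) (at x)"
        using F2[of x] by (auto intro!: derivative_eq_intros)
      moreover have "real m * f x - real m / 2 \<ge> 0"
      proof -
        have "real m * (f x - 1/2) \<ge> 0" using F7[OF x] by simp
        thus ?thesis by (simp add: algebra_simps)
      qed
      ultimately show "\<exists>y. ((\<lambda>x. g x - real m * x / 2) has_real_derivative y) (at x) \<and> 0 \<le> y" by blast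
    qed
    thus ?thesis using g0 by simp
  qed
  have F11: "f' lam \<ge> 0"
  proof (rule ccontr)
    assume "\<not> f' lam \<ge> 0"
    then obtain e where e: "e > 0" "\<forall>h>0. h < e \<longrightarrow> f (lam + h) < f lam"
      using DERIV_neg_dec_right[OF F1[of lam]] by auto
    hence "f (lam + e/2) < 0" using froot by auto
    moreover have "f (lam + e/2) > 0" using F8 e by auto
    ultimately show False by simp
  qed
  have F12: "lam * (lam + 1) * f' lam = (real d + 1) * g lam" using F3[of lam] froot by simp
  have gl: "(real d + 1) * g lam \<le> - ((real d + 1) * real m * \<delta> / 2)"
  proof -
    have "g lam \<le> - (real m * \<delta> / 2)" using F9 F10 by simp
    hence "(real d + 1) * g lam \<le> (real d + 1) * (- (real m * \<delta> / 2))" by (intro mult_left_mono) auto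
    thus ?thesis by simp
  qed
  have q: "- (lam * (lam + 1)) \<le> 1/4"
  proof -
    have "0 \<le> (lam + 1/2)^2" by simp
    thus ?thesis by (simp add: power2_eq_square algebra_simps)
  qed
  have key0: "f' lam \<ge> 2 * ((real d + 1) * real m * \<delta>)"
  proof -
    have "(- (lam * (lam + 1))) * f' lam \<ge> (real d + 1) * real m * \<delta> / 2"
      using F12 gl by simp
    moreover have "(- (lam * (lam + 1))) * f' lam \<le> (1/4) * f' lam"
      using q F11 by (intro mult_right_mono) auto
    ultimately show ?thesis by linarith
  qed
  have key: "f' lam \<ge> 2 * (real d + 1) * real m * \<delta>" using key0 by (simp add: ac_simps)
  have Pd: "poly (pderiv ?J) lam = f' lam"
  proof -
    have "((\<lambda>t. poly ?J t) has_real_derivative poly (pderiv ?J) lam) (at lam)" by (rule poly_DERIV)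
    hence "(f has_real_derivative poly (pderiv ?J) lam) (at lam)" using PJ by simp
    thus ?thesis using F1[of lam] DERIV_unique by blast
  qed
  have Bn: "B \<le> real ((d+1) * m * n ^ (d * m))"
  proof -
    have "B = real (\<Sum>k\<le>d. (d choose k) * ((n - d + k) choose k))"
      unfolding B_def c_def m_def by simp
    also have "\<dots> \<le> real ((d+1) * (n-d) * n ^ (d * (n - d)))"
      using B_bound[OF assms(1,2)] by (simp only: of_nat_le_iff)
    finally show ?thesis unfolding m_def .
  qed
  have np: "real n > 0" using assms by simp
  have "1 / real n ^ (d * m) \<le> 2 * (real d + 1) * real m * \<delta>"
  proof -
    have "2 * (real d + 1) * real m * \<delta> = (real d + 1) * real m / B"
      unfolding \<delta>_def using B1 by (simp add: field_simps)
    moreover have "1 / real n ^ (d * m) \<le> (real d + 1) * real m / B"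
    proof -
      have "B * 1 \<le> (real d + 1) * real m * real n ^ (d * m)" using Bn by (simp add: algebra_simps)
      thus ?thesis using B1 np by (simp add: field_simps)
    qed
    ultimately show ?thesis by simp
  qed
  thus ?thesis using key Pd unfolding m_def by simp
qed

end
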